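(* Let $\mathcal{H}=(V,E)$ be a hypergraph, and consider the mixed integer linear program with variables $w_R\in[0,1]$ for each $R\in E$ and $t_x\in\{0,1\}$ for each $x\in V$: maximize $\sum_{R\in E}w_R$ subject to (a) for all $x\in V$: $\sum_{R\in E: x\in R}w_R\le t_x+(1-t_x)L$; (b) for all $R\in E$: $w_R\le\sum_{x\in R}t_x$; (c) for all $U,W\in E$ and all $y\in U\setminus W$: $w_W\le 1+\sum_{x\in W\setminus U}t_x-t_y$. Fix values of the $t$ variables and let $S=\{x\in V: t_x=1\}$. Then the optimal objective value of the program (optimizing over $w$ with $t$ fixed) is $\tau^*(\mathsf{red}(\mathcal{H}[S]))$.
   Context: $L$ is a fixed large number (large enough that constraint (a) is vacuous when $t_x=0$, e.g. $L\ge|E|$). $\mathcal{H}[S]$ is the hypergraph with vertex set $S$ and edges $\{S\cap e: e\in E, S\cap e\ne\emptyset\}$; $\mathsf{red}$ removes every edge $e$ contained in another edge $e'\ne e$. $\tau^*$ is the value of a maximum fractional edge packing (equivalently, minimum fractional vertex cover); the empty hypergraph has $\tau^*=0$. *)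

theory Defs
  imports Complex_Main
begin

type_synonym 'a hypergraph = "'a set \<times> 'a set set"

definition hypergraph :: "'a hypergraph \<Rightarrow> bool" where
  "hypergraph H \<longleftrightarrow> finite (fst H) \<and> (\<forall>e\<in>snd H. e \<subseteq> fst H)"

definition induced :: "'a hypergraph \<Rightarrow> 'a set \<Rightarrow> 'a hypergraph" where
  "induced H S = (S, {S \<inter> e | e. e \<in> snd H \<and> S \<inter> e \<noteq> {}})"

definition red :: "'a hypergraph \<Rightarrow> 'a hypergraph" where
  "red H = (fst H, {e \<in> snd H. \<not> (\<exists>e'\<in>snd H. e \<subseteq> e' \<and> e' \<noteq> e)})"

definition frac_edge_packing :: "'a hypergraph \<Rightarrow> ('a set \<Rightarrow> real) \<Rightarrow> bool" where
  "frac_edge_packing H y \<longleftrightarrow>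
     (\<forall>f\<in>snd H. 0 \<le> y f) \<and>
     (\<forall>v\<in>fst H. (\<Sum>f\<in>{f\<in>snd H. v \<in> f}. y f) \<le> 1)"

definition tau_star :: "'a hypergraph \<Rightarrow> real" where
  "tau_star H = Sup {(\<Sum>f\<in>snd H. y f) | y. frac_edge_packing H y}"

definition milp_feasible ::
  "'a hypergraph \<Rightarrow> real \<Rightarrow> ('a \<Rightarrow> real) \<Rightarrow> ('a set \<Rightarrow> real) \<Rightarrow> bool" where
  "milp_feasible H L t w \<longleftrightarrow>
     (\<forall>R\<in>snd H. 0 \<le> w R \<and> w R \<le> 1) \<and>
     (\<forall>x\<in>fst H. (\<Sum>R\<in>{R\<in>snd H. x \<in> R}. w R) \<le> t x + (1 - t x) * L) \<and>
     (\<forall>R\<in>snd H. w R \<le> (\<Sum>x\<in>R. t x)) \<and>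
     (\<forall>U\<in>snd H. \<forall>W\<in>snd H. \<forall>y\<in>U - W.
        w W \<le> 1 + (\<Sum>x\<in>W - U. t x) - t y)"

end

theory Submission imports Defs "HOL-Analysis.Analysis" begin

lemma packing_le1:
  assumes fin: "finite (snd H)" and ne: "\<forall>f\<in>snd H. f \<noteq> {} \<and> f \<subseteq> fst H"
    and p: "frac_edge_packing H z" and f: "f \<in> snd H"
  shows "z f \<le> 1"
proof -
  obtain v where v: "v \<in> f" using ne f by blast
  hence vH: "v \<in> fst H" using ne f by blast
  have "z f \<le> (\<Sum>g\<in>{g\<in>snd H. v \<in> g}. z g)"
    by (rule member_le_sum) (use p fin f v in \<open>auto simp: frac_edge_packing_def\<close>)
  also have "\<dots> \<le> 1" using p vH by (auto simp: frac_edge_packing_def)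
  finally show ?thesis .
qed

lemma tau_star_attained:
  assumes fin: "finite (snd H)" and ne: "\<forall>f\<in>snd H. f \<noteq> {} \<and> f \<subseteq> fst H"
  shows "\<exists>y. frac_edge_packing H y \<and> tau_star H = sum y (snd H) \<and>
           (\<forall>z. frac_edge_packing H z \<longrightarrow> sum z (snd H) \<le> sum y (snd H))"
proof -
  define B where "B f = (if f \<in> snd H then {0..1::real} else {0})" for f
  define K where "K = Pi UNIV B \<inter> (\<Inter>v\<in>fst H. {y. sum y {f\<in>snd H. v\<in>f} \<le> 1})"
  have "compactin (product_topology (\<lambda>i. euclidean) UNIV) (PiE UNIV B)"
    unfolding compactin_PiE by (auto simp: B_def)
  hence c1: "compact (Pi UNIV B)"
    by (simp add: euclidean_product_topology PiE_UNIV_domain)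
  have "closed (\<Inter>v\<in>fst H. {y::'a set \<Rightarrow> real. sum y {f\<in>snd H. v\<in>f} \<le> 1})"
    by (intro closed_INT ballI closed_Collect_le continuous_on_sum continuous_on_const
        continuous_on_product_coordinates)
  hence cK: "compact K" unfolding K_def using c1 by blast
  have "(\<lambda>_. 0) \<in> K" by (auto simp: K_def B_def)
  hence neK: "K \<noteq> {}" by blast
  have "continuous_on K (\<lambda>y. sum y (snd H))"
    by (intro continuous_on_sum continuous_on_subset[OF continuous_on_product_coordinates]) auto
  from continuous_attains_sup[OF cK neK this] obtain y where yK: "y \<in> K"
    and ymax: "\<And>z. z \<in> K \<Longrightarrow> sum z (snd H) \<le> sum y (snd H)" by blast
  have py: "frac_edge_packing H y"
  proof -
    have "y f \<in> B f" for f using yK by (auto simp: K_def)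
    hence "0 \<le> y f" if "f \<in> snd H" for f using that by (metis B_def atLeastAtMost_iff)
    thus ?thesis using yK by (auto simp: K_def frac_edge_packing_def)
  qed
  have mx: "sum z (snd H) \<le> sum y (snd H)" if pz: "frac_edge_packing H z" for z
  proof -
    define z' where "z' f = (if f \<in> snd H then z f else 0)" for f
    have "z' \<in> K"
    proof -
      have "z' \<in> Pi UNIV B" using packing_le1[OF fin ne pz] pz
        by (auto simp: z'_def B_def frac_edge_packing_def)
      moreover have "sum z' {f\<in>snd H. v\<in>f} \<le> 1" if "v \<in> fst H" for v
      proof -
        have "sum z' {f\<in>snd H. v\<in>f} = sum z {f\<in>snd H. v\<in>f}" by (rule sum.cong) (auto simp: z'_def)
        thus ?thesis using pz that by (auto simp: frac_edge_packing_def)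
      qed
      ultimately show ?thesis by (auto simp: K_def)
    qed
    hence "sum z' (snd H) \<le> sum y (snd H)" by (rule ymax)
    moreover have "sum z' (snd H) = sum z (snd H)" by (rule sum.cong) (auto simp: z'_def)
    ultimately show ?thesis by simp
  qed
  have "tau_star H = sum y (snd H)"
    unfolding tau_star_def by (rule cSup_eq_maximum) (use py mx in auto)
  thus ?thesis using py mx by blast
qed

theorem lemmaA1:
  fixes V :: "'a set" and E :: "'a set set" and L :: real and t :: "'a \<Rightarrow> real"
  assumes "hypergraph (V, E)"
    and "L \<ge> real (card E)"
    and "\<forall>x\<in>V. t x \<in> {0, 1}"
  defines "S \<equiv> {x \<in> V. t x = 1}"
  shows "(\<exists>w. milp_feasible (V, E) L t w \<and> (\<Sum>R\<in>E. w R) = tau_star (red (induced (V, E) S)))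
       \<and> (\<forall>w. milp_feasible (V, E) L t w \<longrightarrow> (\<Sum>R\<in>E. w R) \<le> tau_star (red (induced (V, E) S)))"
proof -
  note hg = assms(1) and LE = assms(2) and t01 = assms(3)
  have finV: "finite V" and EV: "\<And>e. e \<in> E \<Longrightarrow> e \<subseteq> V" using hg by (auto simp: hypergraph_def)
  have finE: "finite E" by (rule finite_subset[of E "Pow V"]) (use EV finV in auto)
  have tsum: "sum t R = real (card (R \<inter> S))" if "R \<subseteq> V" for R
  proof -
    have fR: "finite R" using that finV finite_subset by blast
    have "sum t R = sum t (R \<inter> S) + sum t (R - S)" using fR by (metis sum.Int_Diff)
    also have "sum t (R \<inter> S) = sum (\<lambda>_. 1) (R \<inter> S)" by (rule sum.cong) (auto simp: S_def)
    also have "sum t (R - S) = sum (\<lambda>_. 0) (R - S)"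
      by (rule sum.cong) (use that t01 in \<open>auto simp: S_def\<close>)
    finally show ?thesis by simp
  qed
  define Tr where "Tr = {S \<inter> e | e. e \<in> E \<and> S \<inter> e \<noteq> {}}"
  define F where "F = {e \<in> Tr. \<not> (\<exists>e'\<in>Tr. e \<subseteq> e' \<and> e' \<noteq> e)}"
  have Hr: "red (induced (V, E) S) = (S, F)" by (simp add: red_def induced_def Tr_def F_def)
  have finTr: "finite Tr"
  proof -
    have "Tr \<subseteq> (\<lambda>e. S \<inter> e) ` E" by (auto simp: Tr_def)
    thus ?thesis using finE finite_surj by blast
  qed
  have finF: "finite F" using finTr by (auto simp: F_def)
  have Fne: "\<forall>f\<in>F. f \<noteq> {} \<and> f \<subseteq> S" by (auto simp: F_def Tr_def)
  have F_E: "\<exists>W\<in>E. W \<inter> S = T" if "T \<in> F" for T using that by (auto simp: F_def Tr_def)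
  from tau_star_attained[of "(S, F)"] finF Fne obtain y where
    py: "frac_edge_packing (S, F) y" and ty: "tau_star (S, F) = sum y F"
    and ymax: "\<And>z. frac_edge_packing (S, F) z \<Longrightarrow> sum z F \<le> sum y F" by auto
  have ts: "tau_star (red (induced (V, E) S)) = sum y F" using Hr ty by simp
  have part2: "(\<Sum>R\<in>E. w R) \<le> sum y F" if fw: "milp_feasible (V, E) L t w" for w
  proof -
    have w01: "\<And>R. R \<in> E \<Longrightarrow> 0 \<le> w R \<and> w R \<le> 1"
      and wa: "\<And>x. x \<in> V \<Longrightarrow> (\<Sum>R\<in>{R\<in>E. x \<in> R}. w R) \<le> t x + (1 - t x) * L"
      and wb: "\<And>R. R \<in> E \<Longrightarrow> w R \<le> sum t R"
      and wc: "\<And>U W y. U \<in> E \<Longrightarrow> W \<in> E \<Longrightarrow> y \<in> U - W \<Longrightarrow> w W \<le> 1 + sum t (W - U) - t y"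
      using fw unfolding milp_feasible_def by auto
    have zero: "w W = 0" if W: "W \<in> E" "W \<inter> S \<notin> F" for W
    proof (cases "W \<inter> S = {}")
      case True
      then show ?thesis using wb[OF W(1)] w01[OF W(1)] tsum[OF EV[OF W(1)]] by simp
    next
      case False
      hence "W \<inter> S \<in> Tr" using W by (auto simp: Tr_def)
      then obtain e' where "e' \<in> Tr" "W \<inter> S \<subseteq> e'" "e' \<noteq> W \<inter> S" using W by (auto simp: F_def)
      then obtain U where U: "U \<in> E" "W \<inter> S \<subseteq> S \<inter> U" "S \<inter> U \<noteq> W \<inter> S" by (auto simp: Tr_def)
      then obtain y0 where y0: "y0 \<in> S \<inter> U" "y0 \<notin> W" by blast
      have "w W \<le> 1 + sum t (W - U) - t y0" using wc[OF U(1) W(1)] y0 by blast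
      moreover have "sum t (W - U) = 0"
      proof -
        have "(W - U) \<inter> S = {}" using U(2) by blast
        thus ?thesis using tsum[of "W - U"] EV[OF W(1)] by auto
      qed
      moreover have "t y0 = 1" using y0 by (auto simp: S_def)
      ultimately show ?thesis using w01[OF W(1)] by simp
    qed
    define z where "z T = sum w {W\<in>E. W \<inter> S = T}" for T
    have grp: "(\<Sum>T\<in>F. P T * z T) = sum (\<lambda>W. P (W \<inter> S) * w W) {W\<in>E. W \<inter> S \<in> F}" for P :: "'a set \<Rightarrow> real"
    proof -
      have "sum (\<lambda>W. P (W \<inter> S) * w W) {W\<in>E. W \<inter> S \<in> F} =
          (\<Sum>T\<in>F. \<Sum>W\<in>{W\<in>{W\<in>E. W \<inter> S \<in> F}. W \<inter> S = T}. P (W \<inter> S) * w W)"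
        by (rule sum.group[symmetric]) (use finE finF in auto)
      also have "\<dots> = (\<Sum>T\<in>F. P T * z T)"
        unfolding z_def sum_distrib_left by (rule sum.cong[OF refl], rule sum.cong) auto
      finally show ?thesis by simp
    qed
    have sumE: "sum w E = sum z F"
    proof -
      have "sum w E = sum w {W\<in>E. W \<inter> S \<in> F}"
        by (rule sum.mono_neutral_right) (use finE zero in auto)
      also have "\<dots> = sum z F" using grp[of "\<lambda>_. 1"] by simp
      finally show ?thesis .
    qed
    have pz: "frac_edge_packing (S, F) z"
      unfolding frac_edge_packing_def
    proof (intro conjI ballI)
      fix f assume "f \<in> snd (S, F)"
      show "0 \<le> z f" unfolding z_def by (rule sum_nonneg) (use w01 in auto)
    next
      fix v assume "v \<in> fst (S, F)"
      hence v: "v \<in> S" by simp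
      have "(\<Sum>f\<in>{f\<in>snd (S, F). v \<in> f}. z f) = (\<Sum>T\<in>F. (if v \<in> T then 1 else 0) * z T)"
        by (simp only: snd_conv sum.inter_filter[OF finF]) (rule sum.cong, auto)
      also have "\<dots> = sum (\<lambda>W. (if v \<in> W \<inter> S then 1 else 0) * w W) {W\<in>E. W \<inter> S \<in> F}"
        by (rule grp)
      also have "\<dots> = sum w {W\<in>E. W \<inter> S \<in> F \<and> v \<in> W}"
      proof -
        have "sum w {W\<in>E. W \<inter> S \<in> F \<and> v \<in> W} = sum w {W\<in>{W\<in>E. W \<inter> S \<in> F}. v \<in> W}"
          by (rule arg_cong[where f="sum w"]) auto
        also have "\<dots> = (\<Sum>W\<in>{W\<in>E. W \<inter> S \<in> F}. if v \<in> W then w W else 0)"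
          by (rule sum.inter_filter) (use finE in auto)
        also have "\<dots> = sum (\<lambda>W. (if v \<in> W \<inter> S then 1 else 0) * w W) {W\<in>E. W \<inter> S \<in> F}"
          by (rule sum.cong) (use v in auto)
        finally show ?thesis by simp
      qed
      also have "\<dots> \<le> sum w {R\<in>E. v \<in> R}"
        by (rule sum_mono2) (use finE w01 in auto)
      also have "\<dots> \<le> 1" using wa[of v] v by (auto simp: S_def)
      finally show "(\<Sum>f\<in>{f\<in>snd (S, F). v \<in> f}. z f) \<le> 1" .
    qed
    show ?thesis using sumE ymax[OF pz] by simp
  qed
  define Wc where "Wc T = (SOME W. W \<in> E \<and> W \<inter> S = T)" for T
  have Wc: "Wc T \<in> E \<and> Wc T \<inter> S = T" if "T \<in> F" for T
    unfolding Wc_def by (rule someI_ex) (use F_E[OF that] in blast)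
  have injW: "inj_on Wc F" by (rule inj_onI) (metis Wc)
  define w where "w R = (if R \<in> Wc ` F then y (R \<inter> S) else 0)" for R
  have yle1: "y f \<le> 1" if "f \<in> F" for f
    using packing_le1[of "(S, F)" y f] finF Fne py that by auto
  have y0: "0 \<le> y f" if "f \<in> F" for f using py that by (auto simp: frac_edge_packing_def)
  have wW: "w (Wc T) = y T" if "T \<in> F" for T using Wc[OF that] that by (auto simp: w_def)
  have WcFE: "Wc ` F \<subseteq> E" using Wc by auto
  have sumw: "\<And>P. sum w {R\<in>E. P R} = sum y {T\<in>F. P (Wc T)}"
  proof -
    fix P
    have "sum w {R\<in>E. P R} = sum w {R\<in>Wc ` F. P R}"
      by (rule sum.mono_neutral_right) (use finE WcFE in \<open>auto simp: w_def\<close>)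
    also have "{R\<in>Wc ` F. P R} = Wc ` {T\<in>F. P (Wc T)}" by auto
    also have "sum w \<dots> = sum (w \<circ> Wc) {T\<in>F. P (Wc T)}"
      by (rule sum.reindex) (rule inj_on_subset[OF injW], auto)
    also have "\<dots> = sum y {T\<in>F. P (Wc T)}" by (rule sum.cong) (auto simp: wW)
    finally show "sum w {R\<in>E. P R} = sum y {T\<in>F. P (Wc T)}" .
  qed
  have feas: "milp_feasible (V, E) L t w"
    unfolding milp_feasible_def fst_conv snd_conv
  proof (intro conjI ballI)
    fix R assume R: "R \<in> E"
    show "0 \<le> w R" using y0 by (auto simp: w_def Wc)
    show "w R \<le> 1" using yle1 by (auto simp: w_def Wc)
    show "w R \<le> sum t R"
    proof (cases "R \<in> Wc ` F")
      case True
      then obtain T where T: "T \<in> F" "R = Wc T" by blast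
      have "T \<noteq> {}" "finite T" using Fne T(1) finV finite_subset[of T V] by (auto simp: S_def)
      hence "1 \<le> card T" by (simp add: Suc_le_eq card_gt_0_iff)
      hence "y T \<le> real (card T)" using yle1[OF T(1)] by linarith
      thus ?thesis using T wW tsum[OF EV[OF R]] Wc[OF T(1)] by (simp add: Int_commute)
    next
      case False
      thus ?thesis using tsum[OF EV[OF R]] by (simp add: w_def)
    qed
  next
    fix x assume x: "x \<in> V"
    show "(\<Sum>R\<in>{R\<in>E. x \<in> R}. w R) \<le> t x + (1 - t x) * L"
    proof (cases "t x = 1")
      case True
      hence xS: "x \<in> S" using x by (auto simp: S_def)
      have "(\<Sum>R\<in>{R\<in>E. x \<in> R}. w R) = sum y {T\<in>F. x \<in> Wc T}" by (rule sumw)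
      also have "{T\<in>F. x \<in> Wc T} = {f\<in>snd (S, F). x \<in> f}" using Wc xS by auto
      also have "sum y \<dots> \<le> 1" using py xS by (auto simp: frac_edge_packing_def)
      finally show ?thesis using True by simp
    next
      case False
      hence tx: "t x = 0" using t01 x by auto
      have "(\<Sum>R\<in>{R\<in>E. x \<in> R}. w R) \<le> (\<Sum>R\<in>{R\<in>E. x \<in> R}. 1)"
        by (rule sum_mono) (use yle1 Wc in \<open>auto simp: w_def\<close>)
      also have "\<dots> = real (card {R\<in>E. x \<in> R})" by simp
      also have "\<dots> \<le> real (card E)" using finE by (simp add: card_mono)
      finally show ?thesis using tx LE by simp
    qed
  next
    fix U W y1 assume U: "U \<in> E" and W: "W \<in> E" and y1: "y1 \<in> U - W"
    have ty1: "t y1 = 0 \<or> t y1 = 1" using t01 EV[OF U] y1 by auto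
    have "W - U \<subseteq> V" using EV[OF W] by blast
    hence c0: "0 \<le> sum t (W - U)" using tsum[of "W - U"] by simp
    show "w W \<le> 1 + sum t (W - U) - t y1"
    proof (cases "W \<in> Wc ` F")
      case False
      thus ?thesis using ty1 c0 by (auto simp: w_def)
    next
      case True
      then obtain T where T: "T \<in> F" "W = Wc T" by blast
      have wle: "w W \<le> 1" using T wW yle1 by auto
      show ?thesis
      proof (cases "t y1 = 1 \<and> (W - U) \<inter> S = {}")
        case False
        moreover have ge1: "(W - U) \<inter> S \<noteq> {} \<Longrightarrow> 1 \<le> sum t (W - U)"
        proof -
          assume ne: "(W - U) \<inter> S \<noteq> {}"
          have "finite ((W - U) \<inter> S)" using finV EV[OF W] finite_subset[of "(W - U) \<inter> S" V] by auto
          hence "1 \<le> card ((W - U) \<inter> S)" using ne by (simp add: Suc_le_eq card_gt_0_iff)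
          moreover have "W - U \<subseteq> V" using EV[OF W] by blast
          ultimately show ?thesis using tsum[of "W - U"] by simp
        qed
        ultimately show ?thesis
        proof (cases "t y1 = 1")
          case True
          hence "(W - U) \<inter> S \<noteq> {}" using False by blast
          thus ?thesis using ge1 wle True by linarith
        next
          case False
          thus ?thesis using ty1 wle c0 by auto
        qed
      next
        case True
        hence y1S: "y1 \<in> S" using y1 EV[OF U] by (auto simp: S_def)
        have TW: "T = W \<inter> S" using Wc[OF T(1)] T(2) by simp
        have "S \<inter> U \<in> Tr" using U y1 y1S by (auto simp: Tr_def)
        moreover have "T \<subseteq> S \<inter> U" using TW True by blast
        moreover have "S \<inter> U \<noteq> T" using TW y1 y1S by blast
        ultimately have False using T(1) by (auto simp: F_def)
        thus ?thesis ..
      qed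
    qed
  qed
  have "sum w E = sum y F" using sumw[of "\<lambda>_. True"] by simp
  thus ?thesis using feas part2 ts by auto
qed

end
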